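(* Let $T^4=\mathbb{R}^4/\mathbb{Z}^{4}$, and let $G$ be a constant Riemannian metric and $B$ a constant real $2$-form on $T^4$ whose components $G_{IJ}$, $B_{IJ}$ in the standard coordinates are all rational numbers (i.e. the $\mathcal N=(1,1)$ SCFT with data $(T^4;G,B)$ is rational). Then there exists a constant complex structure $I$ on $T^4$ such that: $G$ is compatible with $I$; the complex torus $(T^4,I)$ is polarizable; and the cohomology class of $B$ has only a Hodge $(1,1)$ component with respect to $I$. In particular, $B$ lies in the algebraic part $H^2(T^4;\mathbb{Q})\cap H^{1,1}((T^4,I);\mathbb{R})$.
   Context: $T^4=\mathbb{R}^4/\mathbb{Z}^4$ with coordinates $X^1,\dots,X^4$, units normalized so that the lattice is $H_1(T^4;\mathbb{Z})=\mathbb{Z}^4$ and $2\pi\sqrt{\alpha'}=1$. $G=G_{IJ}dX^I\otimes dX^J$ with constant $G_{IJ}$, $B=\frac12 B_{IJ}dX^I\wedge dX^J$ with constant $B_{IJ}$. By the known classification, the $\mathcal N=(1,1)$ SCFT (nonlinear sigma model) for $(T^4;G,B)$ is rational iff all $G_{IJ},B_{IJ}\in\mathbb{Q}$. A constant complex structure $I$ ($I^2=-1$ on $\mathbb{R}^4$) is compatible with $G$ if $G(Iu,Iv)=G(u,v)$. The complex torus $(T^4,I)$ is polarizable if there is a class $\psi\in H^2(T^4;\mathbb{Z})\cap H^{1,1}$ such that $(u,v)\mapsto\psi(Iu,v)$ is positive definite on $H_1(T^4;\mathbb{R})$. Hodge types of classes in $H^2(T^4;\mathbb{C})$ are taken with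 respect to $I$. *)

theory Defs
  imports "HOL-Analysis.Analysis"
begin

text \<open>Constant tensors on T^4 = R^4/Z^4 are 4x4 real matrices of components in the
standard coordinates X^1..X^4; vectors of real^4 are elements of H_1(T^4;R) = R^4
(tangent vectors), the lattice H_1(T^4;Z) being Z^4.\<close>

type_synonym mat4 = "real^4^4"

definition bil :: "mat4 \<Rightarrow> real^4 \<Rightarrow> real^4 \<Rightarrow> real" where
  "bil M u v = (\<Sum>i\<in>UNIV. \<Sum>j\<in>UNIV. M$i$j * u$i * v$j)"

definition rational_matrix :: "mat4 \<Rightarrow> bool" where
  "rational_matrix M \<longleftrightarrow> (\<forall>i j. M$i$j \<in> \<rat>)"

definition integral_matrix :: "mat4 \<Rightarrow> bool" where
  "integral_matrix M \<longleftrightarrow> (\<forall>i j. M$i$j \<in> \<int>)"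

definition riemannian_metric :: "mat4 \<Rightarrow> bool" where
  "riemannian_metric G \<longleftrightarrow> transpose G = G \<and> (\<forall>u. u \<noteq> 0 \<longrightarrow> bil G u u > 0)"

text \<open>Constant real 2-form B = 1/2 B_{IJ} dX^I wedge dX^J: antisymmetric B_{IJ};
as a bilinear form B(u,v) = sum B_{IJ} u^I v^J.\<close>
definition two_form :: "mat4 \<Rightarrow> bool" where
  "two_form B \<longleftrightarrow> transpose B = - B"

definition complex_structure :: "mat4 \<Rightarrow> bool" where
  "complex_structure I \<longleftrightarrow> I ** I = - mat 1"

definition compatible :: "mat4 \<Rightarrow> mat4 \<Rightarrow> bool" where
  "compatible G I \<longleftrightarrow> (\<forall>u v. bil G (I *v u) (I *v v) = bil G u v)"

text \<open>A real (constant) 2-form is purely of Hodge type (1,1) w.r.t. I iff it is I-invariant.\<close>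
definition hodge_11 :: "mat4 \<Rightarrow> mat4 \<Rightarrow> bool" where
  "hodge_11 I w \<longleftrightarrow> (\<forall>u v. bil w (I *v u) (I *v v) = bil w u v)"

text \<open>H^2(T^4;Z) = integral constant 2-forms (values on lattice 2-cycles are integers).\<close>
definition polarizable :: "mat4 \<Rightarrow> bool" where
  "polarizable I \<longleftrightarrow> (\<exists>\<psi>. two_form \<psi> \<and> integral_matrix \<psi> \<and> hodge_11 I \<psi> \<and>
      (\<forall>u. u \<noteq> 0 \<longrightarrow> bil \<psi> (I *v u) u > 0))"

end

theory Submission
  imports Defs
begin

lemma mm_add_r: "(A + B) ** (C::mat4) = A ** C + B ** C"
  by (simp add: vec_eq_iff forall_4 sum_4 matrix_matrix_mult_def algebra_simps)
lemma mm_add_l: "(C::mat4) ** (A + B) = C ** A + C ** B"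
  by (simp add: vec_eq_iff forall_4 sum_4 matrix_matrix_mult_def algebra_simps)
lemma mm_neg_l: "(- A) ** (C::mat4) = - (A ** C)"
  by (simp add: vec_eq_iff forall_4 sum_4 matrix_matrix_mult_def algebra_simps)
lemma mm_neg_r: "(C::mat4) ** (- A) = - (C ** A)"
  by (simp add: vec_eq_iff forall_4 sum_4 matrix_matrix_mult_def algebra_simps)
lemma mm_sc_l: "(c *\<^sub>R A) ** (C::mat4) = c *\<^sub>R (A ** C)"
  by (simp add: vec_eq_iff forall_4 sum_4 matrix_matrix_mult_def algebra_simps)
lemma mm_sc_r: "(C::mat4) ** (c *\<^sub>R A) = c *\<^sub>R (C ** A)"
  by (simp add: vec_eq_iff forall_4 sum_4 matrix_matrix_mult_def algebra_simps)
lemma tr_add: "transpose ((A::mat4) + B) = transpose A + transpose B"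
  by (simp add: vec_eq_iff forall_4 transpose_def)
lemma tr_neg: "transpose (- (A::mat4)) = - transpose A"
  by (simp add: vec_eq_iff forall_4 transpose_def)
lemma tr_sc: "transpose (c *\<^sub>R (A::mat4)) = c *\<^sub>R transpose A"
  by (simp add: vec_eq_iff forall_4 transpose_def)
lemma tr_mm: "transpose ((A::mat4) ** B) = transpose B ** transpose A"
  by (simp add: vec_eq_iff forall_4 sum_4 matrix_matrix_mult_def transpose_def algebra_simps)

lemma bil_add: "bil (A + B) u v = bil A u v + bil B u v"
  by (simp add: bil_def sum_4 algebra_simps)
lemma bil_diff: "bil (A - B) u v = bil A u v - bil B u v"
  by (simp add: bil_def sum_4 algebra_simps)
lemma bil_neg: "bil (- A) u v = - bil A u v"
  by (simp add: bil_def sum_4 algebra_simps)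
lemma bil_sc: "bil (c *\<^sub>R A) u v = c * bil A u v"
  by (simp add: bil_def sum_4 algebra_simps)
lemma bil_mm: "bil (A ** B) u v = bil A u (B *v v)"
  by (simp add: bil_def sum_4 matrix_matrix_mult_def matrix_vector_mult_def algebra_simps)
lemma bil_left: "bil M (X *v u) v = bil (transpose X ** M) u v"
  by (simp add: bil_def sum_4 matrix_matrix_mult_def matrix_vector_mult_def transpose_def algebra_simps)
lemma bil_tr: "bil (transpose M) u v = bil M v u"
  by (simp add: bil_def sum_4 transpose_def algebra_simps)
lemma bil_zero: "bil 0 u v = 0"
  by (simp add: bil_def)
lemma bil_zero_vec: "bil M u 0 = 0" "bil M 0 v = 0"
  by (simp_all add: bil_def)

lemma compat_of: "transpose X ** M ** X = M \<Longrightarrow> bil M (X *v u) (X *v v) = bil M u v"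
  by (metis bil_left bil_mm matrix_mul_assoc)



definition ent4 :: "real \<Rightarrow> real \<Rightarrow> real \<Rightarrow> real \<Rightarrow> real \<Rightarrow> real \<Rightarrow> real \<Rightarrow> real \<Rightarrow> real \<Rightarrow> real \<Rightarrow> real \<Rightarrow> real \<Rightarrow> real \<Rightarrow> real \<Rightarrow> real \<Rightarrow> real \<Rightarrow> mat4" where
 "ent4 a11 a12 a13 a14 a21 a22 a23 a24 a31 a32 a33 a34 a41 a42 a43 a44 =
   (\<chi> i j. if i = 1 then (if j = 1 then a11 else if j = 2 then a12 else if j = 3 then a13 else a14)
     else if i = 2 then (if j = 1 then a21 else if j = 2 then a22 else if j = 3 then a23 else a24)
     else if i = 3 then (if j = 1 then a31 else if j = 2 then a32 else if j = 3 then a33 else a34)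
     else (if j = 1 then a41 else if j = 2 then a42 else if j = 3 then a43 else a44))"

lemma ent4_mult: "ent4 a11 a12 a13 a14 a21 a22 a23 a24 a31 a32 a33 a34 a41 a42 a43 a44 ** ent4 b11 b12 b13 b14 b21 b22 b23 b24 b31 b32 b33 b34 b41 b42 b43 b44 = ent4 (a11*b11+a12*b21+a13*b31+a14*b41) (a11*b12+a12*b22+a13*b32+a14*b42) (a11*b13+a12*b23+a13*b33+a14*b43) (a11*b14+a12*b24+a13*b34+a14*b44) (a21*b11+a22*b21+a23*b31+a24*b41) (a21*b12+a22*b22+a23*b32+a24*b42) (a21*b13+a22*b23+a23*b33+a24*b43) (a21*b14+a22*b24+a23*b34+a24*b44) (a31*b11+a32*b21+a33*b31+a34*b41) (a31*b12+a32*b22+a33*b32+a34*b42) (a31*b13+a32*b23+a33*b33+a34*b43) (a31*b14+a32*b24+a33*b34+a34*b44) (a41*b11+a42*b21+a43*b31+a44*b41) (a41*b12+a42*b22+a43*b32+a44*b42) (a41*b13+a42*b23+a43*b33+a44*b43) (a41*b14+a42*b24+a43*b34+a44*b44)"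
  by (simp add: vec_eq_iff forall_4 sum_4 matrix_matrix_mult_def ent4_def)

lemma ent4_add: "ent4 a11 a12 a13 a14 a21 a22 a23 a24 a31 a32 a33 a34 a41 a42 a43 a44 + ent4 b11 b12 b13 b14 b21 b22 b23 b24 b31 b32 b33 b34 b41 b42 b43 b44 = ent4 (a11+b11) (a12+b12) (a13+b13) (a14+b14) (a21+b21) (a22+b22) (a23+b23) (a24+b24) (a31+b31) (a32+b32) (a33+b33) (a34+b34) (a41+b41) (a42+b42) (a43+b43) (a44+b44)"
  by (simp add: vec_eq_iff forall_4 ent4_def)

lemma ent4_scaleR: "c *\<^sub>R ent4 a11 a12 a13 a14 a21 a22 a23 a24 a31 a32 a33 a34 a41 a42 a43 a44 = ent4 (c*a11) (c*a12) (c*a13) (c*a14) (c*a21) (c*a22) (c*a23) (c*a24) (c*a31) (c*a32) (c*a33) (c*a34) (c*a41) (c*a42) (c*a43) (c*a44)"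
  by (simp add: vec_eq_iff forall_4 ent4_def)

lemma ent4_uminus: "- ent4 a11 a12 a13 a14 a21 a22 a23 a24 a31 a32 a33 a34 a41 a42 a43 a44 = ent4 (-a11) (-a12) (-a13) (-a14) (-a21) (-a22) (-a23) (-a24) (-a31) (-a32) (-a33) (-a34) (-a41) (-a42) (-a43) (-a44)"
  by (simp add: vec_eq_iff forall_4 ent4_def)

lemma ent4_transpose: "transpose (ent4 a11 a12 a13 a14 a21 a22 a23 a24 a31 a32 a33 a34 a41 a42 a43 a44) = ent4 (a11) (a21) (a31) (a41) (a12) (a22) (a32) (a42) (a13) (a23) (a33) (a43) (a14) (a24) (a34) (a44)"
  by (simp add: vec_eq_iff forall_4 ent4_def transpose_def)

lemma ent4_eq: "ent4 a11 a12 a13 a14 a21 a22 a23 a24 a31 a32 a33 a34 a41 a42 a43 a44 = ent4 b11 b12 b13 b14 b21 b22 b23 b24 b31 b32 b33 b34 b41 b42 b43 b44 \<longleftrightarrow> a11 = b11 \<and> a12 = b12 \<and> a13 = b13 \<and> a14 = b14 \<and> a21 = b21 \<and> a22 = b22 \<and> a23 = b23 \<and> a24 = b24 \<and> a31 = b31 \<and> a32 = b32 \<and> a33 = b33 \<and> a34 = b34 \<and> a41 = b41 \<and> a42 = b42 \<and> a43 = b43 \<and> a44 = b44"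
  by (auto simp add: vec_eq_iff forall_4 ent4_def)

lemma mat1_ent4: "mat 1 = ent4 (1) (0) (0) (0) (0) (1) (0) (0) (0) (0) (1) (0) (0) (0) (0) (1)"
  by (simp add: vec_eq_iff forall_4 ent4_def mat_def)

lemma ent4_gen: "M = ent4 (M$1$1) (M$1$2) (M$1$3) (M$1$4) (M$2$1) (M$2$2) (M$2$3) (M$2$4) (M$3$1) (M$3$2) (M$3$3) (M$3$4) (M$4$1) (M$4$2) (M$4$3) (M$4$4)"
  by (simp add: vec_eq_iff forall_4 ent4_def)

lemma ent4_mulv: "ent4 a11 a12 a13 a14 a21 a22 a23 a24 a31 a32 a33 a34 a41 a42 a43 a44 *v u = (\<chi> i. if i = 1 then a11*u$1+a12*u$2+a13*u$3+a14*u$4 else if i = 2 then a21*u$1+a22*u$2+a23*u$3+a24*u$4 else if i = 3 then a31*u$1+a32*u$2+a33*u$3+a34*u$4 else a41*u$1+a42*u$2+a43*u$3+a44*u$4)"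
  by (simp add: vec_eq_iff forall_4 sum_4 matrix_vector_mult_def ent4_def)

definition symm :: "real \<Rightarrow> real \<Rightarrow> real \<Rightarrow> real \<Rightarrow> real \<Rightarrow> real \<Rightarrow> real \<Rightarrow> real \<Rightarrow> real \<Rightarrow> real \<Rightarrow> mat4" where
 "symm g11 g12 g13 g14 g22 g23 g24 g33 g34 g44 = ent4 (g11) (g12) (g13) (g14) (g12) (g22) (g23) (g24) (g13) (g23) (g33) (g34) (g14) (g24) (g34) (g44)"

definition asym :: "real \<Rightarrow> real \<Rightarrow> real \<Rightarrow> real \<Rightarrow> real \<Rightarrow> real \<Rightarrow> mat4" where
 "asym b12 b13 b14 b23 b24 b34 = ent4 (0) (b12) (b13) (b14) ((-b12)) (0) (b23) (b24) ((-b13)) ((-b23)) (0) (b34) ((-b14)) ((-b24)) ((-b34)) (0)"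

definition adjm :: "real \<Rightarrow> real \<Rightarrow> real \<Rightarrow> real \<Rightarrow> real \<Rightarrow> real \<Rightarrow> real \<Rightarrow> real \<Rightarrow> real \<Rightarrow> real \<Rightarrow> mat4" where
 "adjm g11 g12 g13 g14 g22 g23 g24 g33 g34 g44 = ent4 ((g22*g33*g44-g22*g34*g34-g23*g23*g44+g23*g34*g24+g24*g23*g34-g24*g33*g24)) (-(g12*g33*g44-g12*g34*g34-g13*g23*g44+g13*g34*g24+g14*g23*g34-g14*g33*g24)) ((g12*g23*g44-g12*g24*g34-g13*g22*g44+g13*g24*g24+g14*g22*g34-g14*g23*g24)) (-(g12*g23*g34-g12*g24*g33-g13*g22*g34+g13*g24*g23+g14*g22*g33-g14*g23*g23)) (-(g12*g33*g44-g12*g34*g34-g23*g13*g44+g23*g34*g14+g24*g13*g34-g24*g33*g14)) ((g11*g33*g44-g11*g34*g34-g13*g13*g44+g13*g34*g14+g14*g13*g34-g14*g33*g14)) (-(g11*g23*g44-g11*g24*g34-g13*g12*g44+g13*g24*g14+g14*g12*g34-g14*g23*g14)) ((g11*g23*g34-g11*g24*g33-g13*g12*g34+g13*g24*g13+g14*g12*g33-g14*g23*g13)) ((g12*g23*g44-g12*g34*g24-g22*g13*g44+g22*g34*g14+g24*g13*g24-g24*g23*g14)) (-(g11*g23*g44-g11*g34*g24-g12*g13*g44+g12*g34*g14+g14*g13*g24-g14*g23*g14)) ((g11*g22*g44-g11*g24*g24-g12*g12*g44+g12*g24*g14+g14*g12*g24-g14*g22*g14)) (-(g11*g22*g34-g11*g24*g23-g12*g12*g34+g12*g24*g13+g14*g12*g23-g14*g22*g13))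 (-(g12*g23*g34-g12*g33*g24-g22*g13*g34+g22*g33*g14+g23*g13*g24-g23*g23*g14)) ((g11*g23*g34-g11*g33*g24-g12*g13*g34+g12*g33*g14+g13*g13*g24-g13*g23*g14)) (-(g11*g22*g34-g11*g23*g24-g12*g12*g34+g12*g23*g14+g13*g12*g24-g13*g22*g14)) ((g11*g22*g33-g11*g23*g23-g12*g12*g33+g12*g23*g13+g13*g12*g23-g13*g22*g13))"

definition detp :: "real \<Rightarrow> real \<Rightarrow> real \<Rightarrow> real \<Rightarrow> real \<Rightarrow> real \<Rightarrow> real \<Rightarrow> real \<Rightarrow> real \<Rightarrow> real \<Rightarrow> real" where
 "detp g11 g12 g13 g14 g22 g23 g24 g33 g34 g44 = (g11*g22*g33*g44-g11*g22*g34*g34-g11*g23*g23*g44+g11*g23*g34*g24+g11*g24*g23*g34-g11*g24*g33*g24-g12*g12*g33*g44+g12*g12*g34*g34+g12*g23*g13*g44-g12*g23*g34*g14-g12*g24*g13*g34+g12*g24*g33*g14+g13*g12*g23*g44-g13*g12*g34*g24-g13*g22*g13*g44+g13*g22*g34*g14+g13*g24*g13*g24-g13*g24*g23*g14-g14*g12*g23*g34+g14*g12*g33*g24+g14*g22*g13*g34-g14*g22*g33*g14-g14*g23*g13*g24+g14*g23*g23*g14)"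

definition det3p :: "real \<Rightarrow> real \<Rightarrow> real \<Rightarrow> real \<Rightarrow> real \<Rightarrow> real \<Rightarrow> real \<Rightarrow> real \<Rightarrow> real \<Rightarrow> real \<Rightarrow> real" where
 "det3p g11 g12 g13 g14 g22 g23 g24 g33 g34 g44 = (g11*g22*g33-g11*g23*g23-g12*g12*g33+g12*g23*g13+g13*g12*g23-g13*g22*g13)"

definition sp :: "real \<Rightarrow> real \<Rightarrow> real \<Rightarrow> real \<Rightarrow> real \<Rightarrow> real \<Rightarrow> real \<Rightarrow> real \<Rightarrow> real \<Rightarrow> real \<Rightarrow> real \<Rightarrow> real \<Rightarrow> real \<Rightarrow> real \<Rightarrow> real \<Rightarrow> real \<Rightarrow> real" where
 "sp g11 g12 g13 g14 g22 g23 g24 g33 g34 g44 b12 b13 b14 b23 b24 b34 = (1/2)*(0*g11*0*g11+0*g11*b34*g12+0*g11*(-b24)*g13+0*g11*b23*g14+0*g12*(-b34)*g11+0*g12*0*g12+0*g12*b14*g13+0*g12*(-b13)*g14+0*g13*(-(-b24))*g11+0*g13*(-b14)*g12+0*g13*0*g13+0*g13*b12*g14+0*g14*(-b23)*g11+0*g14*(-(-b13))*g12+0*g14*(-b12)*g13+0*g14*0*g14+b34*g12*0*g11+b34*g12*b34*g12+b34*g12*(-b24)*g13+b34*g12*b23*g14+b34*g22*(-b34)*g11+b34*g22*0*g12+b34*g22*b14*g13+b34*g22*(-b13)*g14+b34*g23*(-(-b24))*g11+b34*g23*(-b14)*g12+b34*g23*0*g13+b34*g23*b12*g14+b34*g2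4*(-b23)*g11+b34*g24*(-(-b13))*g12+b34*g24*(-b12)*g13+b34*g24*0*g14+(-b24)*g13*0*g11+(-b24)*g13*b34*g12+(-b24)*g13*(-b24)*g13+(-b24)*g13*b23*g14+(-b24)*g23*(-b34)*g11+(-b24)*g23*0*g12+(-b24)*g23*b14*g13+(-b24)*g23*(-b13)*g14+(-b24)*g33*(-(-b24))*g11+(-b24)*g33*(-b14)*g12+(-b24)*g33*0*g13+(-b24)*g33*b12*g14+(-b24)*g34*(-b23)*g11+(-b24)*g34*(-(-b13))*g12+(-b24)*g34*(-b12)*g13+(-b24)*g34*0*g14+b23*g14*0*g11+b23*g14*b34*g12+b23*g14*(-b24)*g13+b23*g14*b23*g14+b23*g24*(-b34)*g11+b23*g24*0*g12+b23*g24*b14*g13+b23*g24*(-b13)*g14+b23*g34*(-(-b24))*g11+b23*g34*(-b14)*g12+b23*g34*0*g13+b23*g34*b12*g14+b23*g44*(-b23)*g11+b23*g44*(-(-b13))*g12+b23*g44*(-b12)*g13+b23*g44*0*g14+(-b34)*g11*0*g12+(-b34)*g11*b34*g22+(-b34)*g11*(-b24)*g23+(-b34)*g11*b23*g24+(-b34)*g12*(-b34)*g12+(-b34)*g12*0*g22+(-b34)*g12*b14*g23+(-b34)*g12*(-b13)*g24+(-b34)*g13*(-(-b24))*g12+(-b34)*g13*(-b14)*g22+(-b34)*g13*0*g23+(-b34)*g13*b12*g24+(-b34)*g14*(-b23)*g12+(-b34)*g14*(-(-b13))*g22+(-b34)*g14*(-b12)*g23+(-b34)*g14*0*g24+0*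g12*0*g12+0*g12*b34*g22+0*g12*(-b24)*g23+0*g12*b23*g24+0*g22*(-b34)*g12+0*g22*0*g22+0*g22*b14*g23+0*g22*(-b13)*g24+0*g23*(-(-b24))*g12+0*g23*(-b14)*g22+0*g23*0*g23+0*g23*b12*g24+0*g24*(-b23)*g12+0*g24*(-(-b13))*g22+0*g24*(-b12)*g23+0*g24*0*g24+b14*g13*0*g12+b14*g13*b34*g22+b14*g13*(-b24)*g23+b14*g13*b23*g24+b14*g23*(-b34)*g12+b14*g23*0*g22+b14*g23*b14*g23+b14*g23*(-b13)*g24+b14*g33*(-(-b24))*g12+b14*g33*(-b14)*g22+b14*g33*0*g23+b14*g33*b12*g24+b14*g34*(-b23)*g12+b14*g34*(-(-b13))*g22+b14*g34*(-b12)*g23+b14*g34*0*g24+(-b13)*g14*0*g12+(-b13)*g14*b34*g22+(-b13)*g14*(-b24)*g23+(-b13)*g14*b23*g24+(-b13)*g24*(-b34)*g12+(-b13)*g24*0*g22+(-b13)*g24*b14*g23+(-b13)*g24*(-b13)*g24+(-b13)*g34*(-(-b24))*g12+(-b13)*g34*(-b14)*g22+(-b13)*g34*0*g23+(-b13)*g34*b12*g24+(-b13)*g44*(-b23)*g12+(-b13)*g44*(-(-b13))*g22+(-b13)*g44*(-b12)*g23+(-b13)*g44*0*g24+(-(-b24))*g11*0*g13+(-(-b24))*g11*b34*g23+(-(-b24))*g11*(-b24)*g33+(-(-b24))*g11*b23*g34+(-(-b24))*g12*(-b34)*g13+(-(-b24))*g12*0*g23+(-(-b24))*g12*b14*g3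3+(-(-b24))*g12*(-b13)*g34+(-(-b24))*g13*(-(-b24))*g13+(-(-b24))*g13*(-b14)*g23+(-(-b24))*g13*0*g33+(-(-b24))*g13*b12*g34+(-(-b24))*g14*(-b23)*g13+(-(-b24))*g14*(-(-b13))*g23+(-(-b24))*g14*(-b12)*g33+(-(-b24))*g14*0*g34+(-b14)*g12*0*g13+(-b14)*g12*b34*g23+(-b14)*g12*(-b24)*g33+(-b14)*g12*b23*g34+(-b14)*g22*(-b34)*g13+(-b14)*g22*0*g23+(-b14)*g22*b14*g33+(-b14)*g22*(-b13)*g34+(-b14)*g23*(-(-b24))*g13+(-b14)*g23*(-b14)*g23+(-b14)*g23*0*g33+(-b14)*g23*b12*g34+(-b14)*g24*(-b23)*g13+(-b14)*g24*(-(-b13))*g23+(-b14)*g24*(-b12)*g33+(-b14)*g24*0*g34+0*g13*0*g13+0*g13*b34*g23+0*g13*(-b24)*g33+0*g13*b23*g34+0*g23*(-b34)*g13+0*g23*0*g23+0*g23*b14*g33+0*g23*(-b13)*g34+0*g33*(-(-b24))*g13+0*g33*(-b14)*g23+0*g33*0*g33+0*g33*b12*g34+0*g34*(-b23)*g13+0*g34*(-(-b13))*g23+0*g34*(-b12)*g33+0*g34*0*g34+b12*g14*0*g13+b12*g14*b34*g23+b12*g14*(-b24)*g33+b12*g14*b23*g34+b12*g24*(-b34)*g13+b12*g24*0*g23+b12*g24*b14*g33+b12*g24*(-b13)*g34+b12*g34*(-(-b24))*g13+b12*g34*(-b14)*g23+b12*g34*0*g33+b12*g34*b12*g34+b12*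g44*(-b23)*g13+b12*g44*(-(-b13))*g23+b12*g44*(-b12)*g33+b12*g44*0*g34+(-b23)*g11*0*g14+(-b23)*g11*b34*g24+(-b23)*g11*(-b24)*g34+(-b23)*g11*b23*g44+(-b23)*g12*(-b34)*g14+(-b23)*g12*0*g24+(-b23)*g12*b14*g34+(-b23)*g12*(-b13)*g44+(-b23)*g13*(-(-b24))*g14+(-b23)*g13*(-b14)*g24+(-b23)*g13*0*g34+(-b23)*g13*b12*g44+(-b23)*g14*(-b23)*g14+(-b23)*g14*(-(-b13))*g24+(-b23)*g14*(-b12)*g34+(-b23)*g14*0*g44+(-(-b13))*g12*0*g14+(-(-b13))*g12*b34*g24+(-(-b13))*g12*(-b24)*g34+(-(-b13))*g12*b23*g44+(-(-b13))*g22*(-b34)*g14+(-(-b13))*g22*0*g24+(-(-b13))*g22*b14*g34+(-(-b13))*g22*(-b13)*g44+(-(-b13))*g23*(-(-b24))*g14+(-(-b13))*g23*(-b14)*g24+(-(-b13))*g23*0*g34+(-(-b13))*g23*b12*g44+(-(-b13))*g24*(-b23)*g14+(-(-b13))*g24*(-(-b13))*g24+(-(-b13))*g24*(-b12)*g34+(-(-b13))*g24*0*g44+(-b12)*g13*0*g14+(-b12)*g13*b34*g24+(-b12)*g13*(-b24)*g34+(-b12)*g13*b23*g44+(-b12)*g23*(-b34)*g14+(-b12)*g23*0*g24+(-b12)*g23*b14*g34+(-b12)*g23*(-b13)*g44+(-b12)*g33*(-(-b24))*g14+(-b12)*g33*(-b14)*g24+(-b12)*g33*0*g34+(-b12)*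g33*b12*g44+(-b12)*g34*(-b23)*g14+(-b12)*g34*(-(-b13))*g24+(-b12)*g34*(-b12)*g34+(-b12)*g34*0*g44+0*g14*0*g14+0*g14*b34*g24+0*g14*(-b24)*g34+0*g14*b23*g44+0*g24*(-b34)*g14+0*g24*0*g24+0*g24*b14*g34+0*g24*(-b13)*g44+0*g34*(-(-b24))*g14+0*g34*(-b14)*g24+0*g34*0*g34+0*g34*b12*g44+0*g44*(-b23)*g14+0*g44*(-(-b13))*g24+0*g44*(-b12)*g34+0*g44*0*g44)"

definition pf :: "real \<Rightarrow> real \<Rightarrow> real \<Rightarrow> real \<Rightarrow> real \<Rightarrow> real \<Rightarrow> real" where
 "pf b12 b13 b14 b23 b24 b34 = b12*b34 - b13*b24 + b14*b23"

lemma adj_right: "symm g11 g12 g13 g14 g22 g23 g24 g33 g34 g44 ** adjm g11 g12 g13 g14 g22 g23 g24 g33 g34 g44 = detp g11 g12 g13 g14 g22 g23 g24 g33 g34 g44 *\<^sub>R mat 1"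
  unfolding symm_def asym_def adjm_def detp_def pf_def sp_def mat1_ent4 ent4_mult ent4_scaleR ent4_add ent4_eq
  by (intro conjI; algebra)

lemma adj_left: "adjm g11 g12 g13 g14 g22 g23 g24 g33 g34 g44 ** symm g11 g12 g13 g14 g22 g23 g24 g33 g34 g44 = detp g11 g12 g13 g14 g22 g23 g24 g33 g34 g44 *\<^sub>R mat 1"
  unfolding symm_def asym_def adjm_def detp_def pf_def sp_def mat1_ent4 ent4_mult ent4_scaleR ent4_add ent4_eq
  by (intro conjI; algebra)

lemma sharp_right: "asym b12 b13 b14 b23 b24 b34 ** asym b34 (-b24) b23 b14 (-b13) b12 = (- pf b12 b13 b14 b23 b24 b34) *\<^sub>R mat 1"
  unfolding symm_def asym_def adjm_def detp_def pf_def sp_def mat1_ent4 ent4_mult ent4_scaleR ent4_add ent4_eq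
  by (intro conjI; algebra)

lemma sharp_left: "asym b34 (-b24) b23 b14 (-b13) b12 ** asym b12 b13 b14 b23 b24 b34 = (- pf b12 b13 b14 b23 b24 b34) *\<^sub>R mat 1"
  unfolding symm_def asym_def adjm_def detp_def pf_def sp_def mat1_ent4 ent4_mult ent4_scaleR ent4_add ent4_eq
  by (intro conjI; algebra)

lemma key_id: "asym b12 b13 b14 b23 b24 b34 ** adjm g11 g12 g13 g14 g22 g23 g24 g33 g34 g44 ** asym b12 b13 b14 b23 b24 b34 + symm g11 g12 g13 g14 g22 g23 g24 g33 g34 g44 ** asym b34 (-b24) b23 b14 (-b13) b12 ** symm g11 g12 g13 g14 g22 g23 g24 g33 g34 g44 ** asym b34 (-b24) b23 b14 (-b13) b12 ** symm g11 g12 g13 g14 g22 g23 g24 g33 g34 g44 = sp g11 g12 g13 g14 g22 g23 g24 g33 g34 g44 b12 b13 b14 b23 b24 b34 *\<^sub>R symm g11 g12 g13 g14 g22 g23 g24 g33 g34 g44"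
  unfolding symm_def asym_def adjm_def detp_def pf_def sp_def mat1_ent4 ent4_mult ent4_scaleR ent4_add ent4_eq
  by (intro conjI; algebra)

lemma minor1: "bil (symm g11 g12 g13 g14 g22 g23 g24 g33 g34 g44) (\<chi> i. if i = 1 then 1 else if i = 2 then 0 else if i = 3 then 0 else 0) (\<chi> i. if i = 1 then 1 else if i = 2 then 0 else if i = 3 then 0 else 0) = g11"
  by (simp add: bil_def sum_4 symm_def ent4_def detp_def det3p_def; algebra)

lemma minor2: "bil (symm g11 g12 g13 g14 g22 g23 g24 g33 g34 g44) (\<chi> i. if i = 1 then (-g12) else if i = 2 then g11 else if i = 3 then 0 else 0) (\<chi> i. if i = 1 then (-g12) else if i = 2 then g11 else if i = 3 then 0 else 0) = g11 * (g11*g22 - g12*g12)"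
  by (simp add: bil_def sum_4 symm_def ent4_def detp_def det3p_def; algebra)

lemma minor3: "bil (symm g11 g12 g13 g14 g22 g23 g24 g33 g34 g44) (\<chi> i. if i = 1 then (g12*g23 - g13*g22) else if i = 2 then (g13*g12 - g11*g23) else if i = 3 then (g11*g22 - g12*g12) else 0) (\<chi> i. if i = 1 then (g12*g23 - g13*g22) else if i = 2 then (g13*g12 - g11*g23) else if i = 3 then (g11*g22 - g12*g12) else 0) = (g11*g22 - g12*g12) * (det3p g11 g12 g13 g14 g22 g23 g24 g33 g34 g44)"
  by (simp add: bil_def sum_4 symm_def ent4_def detp_def det3p_def; algebra)

lemma minor4: "bil (symm g11 g12 g13 g14 g22 g23 g24 g33 g34 g44) (\<chi> i. if i = 1 then -(g12*g23*g34-g12*g24*g33-g13*g22*g34+g13*g24*g23+g14*g22*g33-g14*g23*g23) else if i = 2 then (g11*g23*g34-g11*g24*g33-g13*g12*g34+g13*g24*g13+g14*g12*g33-g14*g23*g13) else if i = 3 then -(g11*g22*g34-g11*g24*g23-g12*g12*g34+g12*g24*g13+g14*g12*g23-g14*g22*g13) else (g11*g22*g33-g11*g23*g23-g12*g12*g33+g12*g23*g13+g13*g12*g23-g13*g22*g13)) (\<chi> i. if i = 1 then -(g12*g23*g34-g12*g24*g33-g13*g22*g34+g13*g24*g23+g14*g22*g33-g14*g23*g23) else if i = 2 then (g11*g23*g34-g11*g24*g33-g13*g12*g34+g13*g24*g13+g14*g12*g33-g14*g23*g13) else if i = 3 then -(g11*g22*g34-g11*g24*g23-g12*g12*g34+g12*g24*g13+g14*g12*g23-g14*g22*g13)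 else (g11*g22*g33-g11*g23*g23-g12*g12*g33+g12*g23*g13+g13*g12*g23-g13*g22*g13)) = (det3p g11 g12 g13 g14 g22 g23 g24 g33 g34 g44) * detp g11 g12 g13 g14 g22 g23 g24 g33 g34 g44"
  by (simp add: bil_def sum_4 symm_def ent4_def detp_def det3p_def; algebra)

lemma adj_sym: "transpose (adjm g11 g12 g13 g14 g22 g23 g24 g33 g34 g44) = adjm g11 g12 g13 g14 g22 g23 g24 g33 g34 g44"
  unfolding adjm_def ent4_transpose ent4_eq by (simp add: algebra_simps)



lemma ratm_add: "rational_matrix A \<Longrightarrow> rational_matrix B \<Longrightarrow> rational_matrix (A + B)"
  by (simp add: rational_matrix_def)
lemma ratm_mm: "rational_matrix A \<Longrightarrow> rational_matrix B \<Longrightarrow> rational_matrix (A ** B)"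
  by (simp add: rational_matrix_def matrix_matrix_mult_def Rats_sum)
lemma ratm_sc: "r \<in> \<rat> \<Longrightarrow> rational_matrix B \<Longrightarrow> rational_matrix (r *\<^sub>R B)"
  by (simp add: rational_matrix_def)

lemma rat_denom: "(q::real) \<in> \<rat> \<Longrightarrow> \<exists>n::nat. n > 0 \<and> real n * q \<in> \<int>"
proof -
  assume "q \<in> \<rat>"
  then obtain a b where b: "b > 0" and q: "q = of_int a / of_int b" by (rule Rats_cases')
  have "real (nat b) * q = of_int a" using b q by simp
  thus ?thesis using b by (intro exI[of _ "nat b"]) auto
qed

lemma common_denom:
  assumes "rational_matrix M"
  shows "\<exists>N::nat. N > 0 \<and> integral_matrix (real N *\<^sub>R M)"
proof -
  have "\<forall>ij::4\<times>4. \<exists>n::nat. n > 0 \<and> real n * M$(fst ij)$(snd ij) \<in> \<int>"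
    using assms rat_denom unfolding rational_matrix_def by blast
  then obtain nf where nf: "\<And>ij. nf ij > (0::nat) \<and> real (nf ij) * M$(fst ij)$(snd ij) \<in> \<int>"
    by metis
  define N where "N = (\<Prod>ij\<in>UNIV. nf ij)"
  have Npos: "N > 0" unfolding N_def using nf by (simp add: prod_pos)
  have "real N * M$i$j \<in> \<int>" for i j
  proof -
    have "N = nf (i,j) * (\<Prod>ij\<in>UNIV - {(i,j)}. nf ij)"
      unfolding N_def by (simp add: prod.remove)
    hence "real N * M$i$j = real (\<Prod>ij\<in>UNIV - {(i,j)}. nf ij) * (real (nf (i,j)) * M$i$j)"
      by simp
    also have "\<dots> \<in> \<int>" by (rule Ints_mult[OF Ints_of_nat]) (use nf[of "(i,j)"] in simp)
    finally show ?thesis .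
  qed
  thus ?thesis using Npos unfolding integral_matrix_def by auto
qed



lemma inv_conj:
  fixes I G M :: mat4
  assumes sk: "transpose I ** G = -(G ** I)" and II: "I ** I = - mat 1" and cm: "M ** I = I ** M"
  shows "transpose I ** (G ** M) ** I = G ** M"
proof -
  have "transpose I ** (G ** M) ** I = (transpose I ** G) ** (M ** I)"
    by (simp add: matrix_mul_assoc)
  also have "\<dots> = - (G ** ((I ** I) ** M))" using sk cm by (simp add: mm_neg_l matrix_mul_assoc)
  also have "\<dots> = G ** M" using II by (simp add: mm_neg_l mm_neg_r)
  finally show ?thesis .
qed

locale frame =
  fixes G Gi C S :: mat4 and p s d :: real
  assumes symG: "transpose G = G"
    and posG: "\<And>u. u \<noteq> 0 \<Longrightarrow> bil G u u > 0"
    and GGi: "G ** Gi = mat 1" and GiG: "Gi ** G = mat 1" and symGi: "transpose Gi = Gi"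
    and asC: "transpose C = - C" and asS: "transpose S = - S"
    and comm1: "(Gi ** C) ** (S ** G) = p *\<^sub>R mat 1"
    and comm2: "(S ** G) ** (Gi ** C) = p *\<^sub>R mat 1"
    and sq: "d *\<^sub>R ((Gi ** C) ** (Gi ** C)) + (S ** G) ** (S ** G) = s *\<^sub>R mat 1"
    and dpos: "d > 0"
begin

definition "K1 = Gi ** C"
definition "K2 = S ** G"
definition "J \<delta> = K1 + (1/\<delta>) *\<^sub>R K2"

lemma GK1: "G ** K1 = C"
  unfolding K1_def by (simp add: matrix_mul_assoc GGi)

lemma sk1: "transpose K1 ** G = -(G ** K1)"
  unfolding GK1 unfolding K1_def tr_mm symGi asC
  by (simp add: mm_neg_l mm_neg_r matrix_mul_assoc[symmetric] GiG)

lemma sk2: "transpose K2 ** G = -(G ** K2)"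
  unfolding K2_def tr_mm symG asS
  by (simp add: mm_neg_l mm_neg_r matrix_mul_assoc)

lemma skJ: "transpose (J \<delta>) ** G = -(G ** J \<delta>)"
  unfolding J_def tr_add tr_sc mm_add_r mm_add_l mm_sc_l mm_sc_r sk1 sk2
  by simp

lemma c12: "K1 ** K2 = p *\<^sub>R mat 1" using comm1 unfolding K1_def K2_def .
lemma c21: "K2 ** K1 = p *\<^sub>R mat 1" using comm2 unfolding K1_def K2_def .

lemma JJ:
  assumes "\<delta> * \<delta> = d"
  shows "J \<delta> ** J \<delta> = (s/d + 2*p/\<delta>) *\<^sub>R mat 1"
proof -
  have dn: "\<delta> \<noteq> 0" using assms dpos by auto
  have Y: "K2 ** K2 = s *\<^sub>R mat 1 - d *\<^sub>R (K1 ** K1)"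
    using sq unfolding K1_def K2_def by (simp add: algebra_simps)
  have "J \<delta> ** J \<delta> = K1 ** K1 + (1/\<delta>) *\<^sub>R (K1 ** K2) + (1/\<delta>) *\<^sub>R (K2 ** K1) + ((1/\<delta>) * (1/\<delta>)) *\<^sub>R (K2 ** K2)"
    unfolding J_def mm_add_r mm_add_l mm_sc_l mm_sc_r by (simp add: algebra_simps)
  also have "\<dots> = K1 ** K1 + (2*p/\<delta>) *\<^sub>R mat 1 + (1/d) *\<^sub>R (s *\<^sub>R mat 1 - d *\<^sub>R (K1 ** K1))"
  proof -
    have e: "(2*p/\<delta>) *\<^sub>R (mat 1::mat4) = (1/\<delta>) *\<^sub>R (p *\<^sub>R mat 1) + (1/\<delta>) *\<^sub>R (p *\<^sub>R mat 1)"
      by (simp add: scaleR_add_left[symmetric])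
    have f: "(1/\<delta>) * (1/\<delta>) = 1/d" using assms by simp
    show ?thesis unfolding c12 c21 Y e f by (simp add: add.assoc)
  qed
  also have "\<dots> = (s/d + 2*p/\<delta>) *\<^sub>R mat 1"
    using dpos by (simp add: algebra_simps scaleR_diff_right divide_inverse)
  finally show ?thesis .
qed

lemma K1J: "K1 ** J \<delta> = J \<delta> ** K1"
  unfolding J_def mm_add_r mm_add_l mm_sc_l mm_sc_r c12 c21 by simp
lemma K2J: "K2 ** J \<delta> = J \<delta> ** K2"
  unfolding J_def mm_add_r mm_add_l mm_sc_l mm_sc_r c12 c21 by simp

lemma Gsym_bil: "bil G u v = bil G v u"
  by (metis bil_tr symG)

lemma GK2_bil: "bil (G ** K2) u w = - bil G (K2 *v u) w"
proof -
  have "bil (G ** K2) u w = bil (transpose (G ** K2)) w u" by (simp add: bil_tr)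
  also have "\<dots> = bil (-(G ** K2)) w u" by (simp add: tr_mm symG sk2)
  also have "\<dots> = - bil G (K2 *v u) w" by (simp add: bil_neg bil_mm Gsym_bil)
  finally show ?thesis .
qed

lemma Gnonneg: "bil G u u \<ge> 0"
  using posG[of u] by (cases "u = 0") (auto simp: bil_zero_vec)

lemma construct:
  assumes dd: "\<delta> * \<delta> = d" and apos: "a > 0" and adef: "s/d + 2*p/\<delta> = -a"
    and e1: "(r - 1/\<delta>)/\<delta> \<ge> 0" and e2: "(r - 1/\<delta>)*p < a"
  defines "I \<equiv> (1/sqrt a) *\<^sub>R J \<delta>" and "M \<equiv> K1 + r *\<^sub>R K2"
  shows "I ** I = - mat 1" "transpose I ** G ** I = G" "transpose I ** C ** I = C"
    "transpose I ** (G ** M) ** I = G ** M" "\<And>u. u \<noteq> 0 \<Longrightarrow> bil (G ** M) (I *v u) u > 0"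
proof -
  have JJa: "J \<delta> ** J \<delta> = (-a) *\<^sub>R mat 1" using JJ[OF dd] adef by simp
  show II: "I ** I = - mat 1"
    unfolding I_def mm_sc_l mm_sc_r JJa using apos
    by (simp add: scaleR_scaleR)
  have skI: "transpose I ** G = -(G ** I)"
    unfolding I_def tr_sc mm_sc_l mm_sc_r skJ by simp
  have K1I: "K1 ** I = I ** K1" unfolding I_def mm_sc_l mm_sc_r K1J by simp
  have K2I: "K2 ** I = I ** K2" unfolding I_def mm_sc_l mm_sc_r K2J by simp
  have MI: "M ** I = I ** M" unfolding M_def mm_add_r mm_add_l mm_sc_l mm_sc_r K1I K2I by simp
  show "transpose I ** G ** I = G" using inv_conj[OF skI II, of "mat 1"] by simp
  show "transpose I ** C ** I = C" using inv_conj[OF skI II K1I] GK1 by simp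
  show "transpose I ** (G ** M) ** I = G ** M" using inv_conj[OF skI II MI] .
  fix u :: "real^4" assume u: "u \<noteq> 0"
  define \<epsilon> where "\<epsilon> = r - 1/\<delta>"
  have Mj: "M = J \<delta> + \<epsilon> *\<^sub>R K2" unfolding M_def J_def \<epsilon>_def by (simp add: algebra_simps)
  have JK2: "J \<delta> ** K2 = p *\<^sub>R mat 1 + (1/\<delta>) *\<^sub>R (K2 ** K2)"
    unfolding J_def mm_add_r mm_sc_l c12 ..
  have "bil (G ** M) (I *v u) u = bil (transpose I ** (G ** M)) u u" by (simp add: bil_left)
  also have "\<dots> = - bil (G ** (I ** M)) u u"
    by (simp add: matrix_mul_assoc skI mm_neg_l bil_neg)
  also have "\<dots> = - ((1/sqrt a) * ((-a) * bil G u u + \<epsilon> * (p * bil G u u + (1/\<delta>) * bil (G ** K2 ** K2) u u)))"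
    unfolding I_def Mj mm_sc_l mm_sc_r mm_add_l mm_add_r JJa JK2
    by (simp add: bil_add bil_sc bil_diff matrix_mul_assoc algebra_simps)
  also have "\<dots> = (1/sqrt a) * ((a - \<epsilon>*p) * bil G u u + (\<epsilon>/\<delta>) * bil G (K2 *v u) (K2 *v u))"
    unfolding bil_mm[of "G ** K2"] GK2_bil by (simp add: algebra_simps)
  also have "\<dots> > 0"
  proof -
    have "(a - \<epsilon>*p) * bil G u u > 0" using e2 posG[OF u] unfolding \<epsilon>_def by simp
    moreover have "(\<epsilon>/\<delta>) * bil G (K2 *v u) (K2 *v u) \<ge> 0" using mult_nonneg_nonneg[OF e1 Gnonneg[of "K2 *v u"]] unfolding \<epsilon>_def .
    ultimately show ?thesis using apos by (simp add: add_pos_nonneg)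
  qed
  finally show "bil (G ** M) (I *v u) u > 0" .
qed

lemma Jzero:
  assumes dd: "\<delta> * \<delta> = d" and c: "s/d + 2*p/\<delta> \<ge> 0"
  shows "J \<delta> = 0"
proof -
  have "J \<delta> *v u = 0 *v u" for u
  proof (rule ccontr)
    assume ne: "J \<delta> *v u \<noteq> 0 *v u"
    hence ne': "J \<delta> *v u \<noteq> 0" by simp
    have "bil G (J \<delta> *v u) (J \<delta> *v u) = bil (transpose (J \<delta>) ** G ** J \<delta>) u u"
      by (simp add: bil_left bil_mm)
    also have "\<dots> = - ((s/d + 2*p/\<delta>) * bil G u u)"
      by (simp add: skJ mm_neg_l matrix_mul_assoc[symmetric] JJ[OF dd] mm_sc_r bil_neg bil_sc)
    also have "\<dots> \<le> 0" using c Gnonneg[of u] by simp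
    finally show False using posG[OF ne'] by simp
  qed
  thus ?thesis by (simp add: matrix_eq)
qed

lemma C_zero: assumes "J \<delta> = 0" "J (-\<delta>) = 0" shows "C = 0"
proof -
  have "J \<delta> + J (-\<delta>) = 2 *\<^sub>R K1" unfolding J_def by (simp add: algebra_simps scaleR_2)
  hence "K1 = 0" using assms by simp
  thus ?thesis using GK1 by simp
qed

lemma exists_delta:
  assumes "C \<noteq> 0"
  shows "\<exists>\<delta> a. \<delta> * \<delta> = d \<and> a > 0 \<and> s/d + 2*p/\<delta> = -a"
proof (rule ccontr)
  assume na: "\<not> ?thesis"
  define \<delta> where "\<delta> = sqrt d"
  have d1: "\<delta> * \<delta> = d" and d2: "(-\<delta>) * (-\<delta>) = d" using dpos unfolding \<delta>_def by simp_all
  have "s/d + 2*p/\<delta> \<ge> 0"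
    using na d1 by (metis add.inverse_inverse neg_less_0_iff_less not_le)
  moreover have "s/d + 2*p/(-\<delta>) \<ge> 0"
    using na d2 by (metis add.inverse_inverse neg_less_0_iff_less not_le)
  ultimately have "J \<delta> = 0" "J (-\<delta>) = 0" using Jzero d1 d2 by auto
  thus False using C_zero assms by blast
qed

end


context frame begin

lemma choose_r:
  assumes "\<delta> \<noteq> 0" "a > 0"
  shows "\<exists>r\<in>\<rat>. (r - 1/\<delta>)/\<delta> \<ge> 0 \<and> (r - 1/\<delta>)*p < a"
proof -
  define \<eta> where "\<eta> = a / (\<bar>p\<bar> + 1)"
  have \<eta>: "\<eta> > 0" using assms unfolding \<eta>_def by simp
  have key: "e * p < a" if "\<bar>e\<bar> < \<eta>" for e
  proof -
    have "e * p \<le> \<bar>e\<bar> * \<bar>p\<bar>" by (metis abs_ge_self abs_mult)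
    also have "\<dots> \<le> \<eta> * \<bar>p\<bar>" using that by (simp add: mult_right_mono)
    also have "\<dots> < a"
    proof -
      have "\<eta> * \<bar>p\<bar> = a * (\<bar>p\<bar> / (\<bar>p\<bar> + 1))" unfolding \<eta>_def by simp
      also have "\<dots> < a * 1" using assms by (intro mult_strict_left_mono) auto
      finally show ?thesis by simp
    qed
    finally show ?thesis .
  qed
  show ?thesis
  proof (cases "\<delta> > 0")
    case True
    obtain r where r: "r \<in> \<rat>" "1/\<delta> < r" "r < 1/\<delta> + \<eta>"
      using Rats_dense_in_real[of "1/\<delta>" "1/\<delta> + \<eta>"] \<eta> by auto
    have "(r - 1/\<delta>)/\<delta> \<ge> 0" using r True by simp
    moreover have "(r - 1/\<delta>)*p < a" using r by (intro key) simp
    ultimately show ?thesis using r by blast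
  next
    case False
    hence neg: "\<delta> < 0" using assms by simp
    obtain r where r: "r \<in> \<rat>" "1/\<delta> - \<eta> < r" "r < 1/\<delta>"
      using Rats_dense_in_real[of "1/\<delta> - \<eta>" "1/\<delta>"] \<eta> by auto
    have "(r - 1/\<delta>)/\<delta> \<ge> 0" using r neg by (simp add: divide_nonpos_neg)
    moreover have "(r - 1/\<delta>)*p < a" using r by (intro key) simp
    ultimately show ?thesis using r by blast
  qed
qed

lemma final:
  assumes Cn: "C \<noteq> 0" and rG: "rational_matrix G" and rC: "rational_matrix C" and rS: "rational_matrix S"
  shows "\<exists>I. complex_structure I \<and> compatible G I \<and> polarizable I \<and> hodge_11 I C"
proof -
  obtain \<delta> a where dd: "\<delta> * \<delta> = d" and apos: "a > 0" and adef: "s/d + 2*p/\<delta> = -a"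
    using exists_delta[OF Cn] by blast
  have dn: "\<delta> \<noteq> 0" using dd dpos by auto
  obtain r where rq: "r \<in> \<rat>" and e1: "(r - 1/\<delta>)/\<delta> \<ge> 0" and e2: "(r - 1/\<delta>)*p < a"
    using choose_r[OF dn apos] by blast
  define I where "I = (1/sqrt a) *\<^sub>R J \<delta>"
  define M where "M = K1 + r *\<^sub>R K2"
  note cs = construct[OF dd apos adef e1 e2, folded I_def M_def]
  define \<psi>0 where "\<psi>0 = G ** M"
  have psi0: "\<psi>0 = C + r *\<^sub>R (G ** S ** G)"
    unfolding \<psi>0_def M_def mm_add_l mm_sc_r GK1 K2_def by (simp add: matrix_mul_assoc)
  have r\<psi>: "rational_matrix \<psi>0" unfolding psi0
    by (intro ratm_add ratm_sc ratm_mm rC rq rG rS)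
  obtain N :: nat where Npos: "N > 0" and Nint: "integral_matrix (real N *\<^sub>R \<psi>0)"
    using common_denom[OF r\<psi>] by blast
  define \<psi> where "\<psi> = real N *\<^sub>R \<psi>0"
  have tM: "transpose M ** G = -(G ** M)"
    unfolding M_def tr_add tr_sc mm_add_r mm_add_l mm_sc_l mm_sc_r sk1 sk2 by simp
  have two: "two_form \<psi>"
    unfolding two_form_def \<psi>_def \<psi>0_def tr_sc tr_mm symG tM by simp
  have hp: "hodge_11 I \<psi>"
  proof -
    have "transpose I ** \<psi> ** I = \<psi>"
      unfolding \<psi>_def mm_sc_l mm_sc_r \<psi>0_def using cs(4) by simp
    thus ?thesis unfolding hodge_11_def by (simp add: compat_of)
  qed
  have pos: "bil \<psi> (I *v u) u > 0" if "u \<noteq> 0" for u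
    unfolding \<psi>_def \<psi>0_def bil_sc using cs(5)[OF that] Npos by simp
  have "polarizable I"
    unfolding polarizable_def using two Nint hp pos unfolding \<psi>_def by blast
  moreover have "complex_structure I" unfolding complex_structure_def using cs(1) .
  moreover have "compatible G I" unfolding compatible_def using cs(2) by (simp add: compat_of)
  moreover have "hodge_11 I C" unfolding hodge_11_def using cs(3) by (simp add: compat_of)
  ultimately show ?thesis by blast
qed

end


lemma nz_vec: "(v::real^4) $ k \<noteq> 0 \<Longrightarrow> v \<noteq> 0" by auto

lemma detp_pos:
  assumes pos: "\<And>u. u \<noteq> 0 \<Longrightarrow> bil (symm g11 g12 g13 g14 g22 g23 g24 g33 g34 g44) u u > 0"
  shows "det3p g11 g12 g13 g14 g22 g23 g24 g33 g34 g44 > 0 \<and> detp g11 g12 g13 g14 g22 g23 g24 g33 g34 g44 > 0"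
proof -
  have p1: "g11 > 0" using pos[of "(\<chi> i. if i = 1 then 1 else if i = 2 then 0 else if i = 3 then 0 else (0::real))"] minor1 by (simp add: vec_eq_iff forall_4)
  have "g11 * (g11*g22 - g12*g12) > 0"
    using pos[of "(\<chi> i. if i = 1 then (-g12) else if i = 2 then g11 else if i = 3 then 0 else 0)", OF nz_vec[of _ 2]] minor2 p1 by simp
  hence p2: "g11*g22 - g12*g12 > 0" using p1 by (simp add: zero_less_mult_iff)
  have "(g11*g22 - g12*g12) * det3p g11 g12 g13 g14 g22 g23 g24 g33 g34 g44 > 0"
    using pos[of "(\<chi> i. if i = 1 then (g12*g23 - g13*g22) else if i = 2 then (g13*g12 - g11*g23) else if i = 3 then (g11*g22 - g12*g12) else 0)", OF nz_vec[of _ 3]] minor3 p2 by simp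
  hence p3: "det3p g11 g12 g13 g14 g22 g23 g24 g33 g34 g44 > 0" using p2 by (simp add: zero_less_mult_iff)
  have "det3p g11 g12 g13 g14 g22 g23 g24 g33 g34 g44 * detp g11 g12 g13 g14 g22 g23 g24 g33 g34 g44 > 0"
    using pos[of "(\<chi> i. if i = 1 then -(g12*g23*g34-g12*g24*g33-g13*g22*g34+g13*g24*g23+g14*g22*g33-g14*g23*g23) else if i = 2 then (g11*g23*g34-g11*g24*g33-g13*g12*g34+g13*g24*g13+g14*g12*g33-g14*g23*g13) else if i = 3 then -(g11*g22*g34-g11*g24*g23-g12*g12*g34+g12*g24*g13+g14*g12*g23-g14*g22*g13) else (g11*g22*g33-g11*g23*g23-g12*g12*g33+g12*g23*g13+g13*g12*g23-g13*g22*g13))", OF nz_vec[of _ 4]] minor4 p3 by (simp add: det3p_def)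
  hence "detp g11 g12 g13 g14 g22 g23 g24 g33 g34 g44 > 0" using p3 by (simp add: zero_less_mult_iff)
  thus ?thesis using p3 by simp
qed



lemma asym_tr: "transpose (asym b12 b13 b14 b23 b24 b34) = - asym b12 b13 b14 b23 b24 b34"
  unfolding asym_def ent4_transpose ent4_uminus ent4_eq by simp

lemma asym_rat: "b12 \<in> \<rat> \<Longrightarrow> b13 \<in> \<rat> \<Longrightarrow> b14 \<in> \<rat> \<Longrightarrow> b23 \<in> \<rat> \<Longrightarrow> b24 \<in> \<rat> \<Longrightarrow> b34 \<in> \<rat> \<Longrightarrow>
  rational_matrix (asym b12 b13 b14 b23 b24 b34)"
  unfolding rational_matrix_def asym_def ent4_def by simp

lemma main_C:
  fixes G C :: mat4
  assumes rm: "riemannian_metric G" and tf: "two_form C" and rG: "rational_matrix G"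
    and rC: "rational_matrix C" and Cn: "C \<noteq> 0"
  shows "\<exists>I. complex_structure I \<and> compatible G I \<and> polarizable I \<and> hodge_11 I C"
proof -
  have symG: "transpose G = G" and posG: "\<And>u. u \<noteq> 0 \<Longrightarrow> bil G u u > 0"
    using rm unfolding riemannian_metric_def by auto
  have asC: "transpose C = - C" using tf unfolding two_form_def .
  have gs: "G$i$j = G$j$i" for i j using arg_cong[OF symG, of "\<lambda>M. M$j$i"] by (simp add: transpose_def)
  have cs: "C$i$j = - C$j$i" for i j using arg_cong[OF asC, of "\<lambda>M. M$j$i"] by (simp add: transpose_def)
  have cd: "C$i$i = 0" for i using cs[of i i] by simp
  have Geq: "G = symm (G$1$1) (G$1$2) (G$1$3) (G$1$4) (G$2$2) (G$2$3) (G$2$4) (G$3$3) (G$3$4) (G$4$4)"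
    unfolding symm_def by (subst ent4_gen[of G]) (simp add: ent4_eq gs[of 2 1] gs[of 3 1] gs[of 4 1] gs[of 3 2] gs[of 4 2] gs[of 4 3])
  have Ceq: "C = asym (C$1$2) (C$1$3) (C$1$4) (C$2$3) (C$2$4) (C$3$4)"
    unfolding asym_def by (subst ent4_gen[of C]) (simp add: ent4_eq cd cs[of 2 1] cs[of 3 1] cs[of 4 1] cs[of 3 2] cs[of 4 2] cs[of 4 3])
  define d where "d = detp (G$1$1) (G$1$2) (G$1$3) (G$1$4) (G$2$2) (G$2$3) (G$2$4) (G$3$3) (G$3$4) (G$4$4)"
  define adjG where "adjG = adjm (G$1$1) (G$1$2) (G$1$3) (G$1$4) (G$2$2) (G$2$3) (G$2$4) (G$3$3) (G$3$4) (G$4$4)"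
  define S where "S = asym (C$3$4) (-C$2$4) (C$2$3) (C$1$4) (-C$1$3) (C$1$2)"
  define p where "p = - pf (C$1$2) (C$1$3) (C$1$4) (C$2$3) (C$2$4) (C$3$4)"
  define s where "s = sp (G$1$1) (G$1$2) (G$1$3) (G$1$4) (G$2$2) (G$2$3) (G$2$4) (G$3$3) (G$3$4) (G$4$4) (C$1$2) (C$1$3) (C$1$4) (C$2$3) (C$2$4) (C$3$4)"
  define Gi where "Gi = (1/d) *\<^sub>R adjG"
  have dpos: "d > 0" unfolding d_def
    using detp_pos[of "G$1$1" "G$1$2" "G$1$3" "G$1$4" "G$2$2" "G$2$3" "G$2$4" "G$3$3" "G$3$4" "G$4$4", folded Geq, OF posG] by (rule conjunct2)
  have GA: "G ** adjG = d *\<^sub>R mat 1" using adj_right[of "G$1$1" "G$1$2" "G$1$3" "G$1$4" "G$2$2" "G$2$3" "G$2$4" "G$3$3" "G$3$4" "G$4$4", folded Geq] unfolding d_def adjG_def .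
  have AG: "adjG ** G = d *\<^sub>R mat 1" using adj_left[of "G$1$1" "G$1$2" "G$1$3" "G$1$4" "G$2$2" "G$2$3" "G$2$4" "G$3$3" "G$3$4" "G$4$4", folded Geq] unfolding d_def adjG_def .
  have CS: "C ** S = p *\<^sub>R mat 1" using sharp_right[of "C$1$2" "C$1$3" "C$1$4" "C$2$3" "C$2$4" "C$3$4", folded Ceq] unfolding S_def p_def .
  have SC: "S ** C = p *\<^sub>R mat 1" using sharp_left[of "C$3$4" "C$2$4" "C$2$3" "C$1$4" "C$1$3" "C$1$2", folded Ceq] unfolding S_def p_def .
  have key: "C ** adjG ** C + G ** S ** G ** S ** G = s *\<^sub>R G"
    using key_id[of "C$1$2" "C$1$3" "C$1$4" "C$2$3" "C$2$4" "C$3$4" "G$1$1" "G$1$2" "G$1$3" "G$1$4" "G$2$2" "G$2$3" "G$2$4" "G$3$3" "G$3$4" "G$4$4", folded Ceq Geq] unfolding S_def s_def adjG_def .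
  have GGi: "G ** Gi = mat 1" unfolding Gi_def mm_sc_r GA using dpos by simp
  have GiG: "Gi ** G = mat 1" unfolding Gi_def mm_sc_l AG using dpos by simp
  have symGi: "transpose Gi = Gi" unfolding Gi_def tr_sc adjG_def adj_sym ..
  have asS: "transpose S = - S" unfolding S_def asym_tr ..
  have comm1: "(Gi ** C) ** (S ** G) = p *\<^sub>R mat 1"
  proof -
    have "(Gi ** C) ** (S ** G) = Gi ** ((C ** S) ** G)" by (simp add: matrix_mul_assoc)
    also have "\<dots> = p *\<^sub>R mat 1" unfolding CS mm_sc_l mm_sc_r by (simp add: GiG)
    finally show ?thesis .
  qed
  have comm2: "(S ** G) ** (Gi ** C) = p *\<^sub>R mat 1"
  proof -
    have "(S ** G) ** (Gi ** C) = S ** ((G ** Gi) ** C)" by (simp add: matrix_mul_assoc)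
    also have "\<dots> = p *\<^sub>R mat 1" using SC by (simp add: GGi)
    finally show ?thesis .
  qed
  have sq: "d *\<^sub>R ((Gi ** C) ** (Gi ** C)) + (S ** G) ** (S ** G) = s *\<^sub>R mat 1"
  proof -
    have a: "d *\<^sub>R ((Gi ** C) ** (Gi ** C)) = Gi ** (C ** adjG ** C)"
      unfolding Gi_def mm_sc_l mm_sc_r using dpos by (simp add: matrix_mul_assoc)
    have b: "(S ** G) ** (S ** G) = Gi ** (G ** S ** G ** S ** G)"
      by (simp add: matrix_mul_assoc GiG)
    have "d *\<^sub>R ((Gi ** C) ** (Gi ** C)) + (S ** G) ** (S ** G) = Gi ** (s *\<^sub>R G)"
      unfolding a b key[symmetric] mm_add_l ..
    also have "\<dots> = s *\<^sub>R mat 1" unfolding mm_sc_r GiG ..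
    finally show ?thesis .
  qed
  have rCe: "C$i$j \<in> \<rat>" for i j using rC unfolding rational_matrix_def by blast
  have rS: "rational_matrix S" unfolding S_def by (intro asym_rat) (simp_all add: rCe)
  interpret frame G Gi C S p s d
    by unfold_locales (fact symG posG GGi GiG symGi asC asS comm1 comm2 sq dpos)+
  show ?thesis using final[OF Cn rG rC rS] .
qed



theorem proposition3p4:
  fixes G B :: mat4
  assumes "riemannian_metric G" and "two_form B"
    and "rational_matrix G" and "rational_matrix B"
  shows "\<exists>I. complex_structure I \<and> compatible G I \<and> polarizable I \<and> hodge_11 I B"
proof (cases "B = 0")
  case False
  thus ?thesis using main_C assms by blast
next
  case True
  define C0 where "C0 = asym 1 0 0 0 0 0"
  have "two_form C0" unfolding C0_def two_form_def asym_tr ..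
  moreover have "rational_matrix C0" unfolding C0_def by (intro asym_rat) auto
  moreover have "C0 \<noteq> 0"
  proof
    assume "C0 = 0"
    hence "C0 $ 1 $ 2 = 0" by simp
    thus False unfolding C0_def asym_def ent4_def by simp
  qed
  ultimately obtain I where "complex_structure I \<and> compatible G I \<and> polarizable I"
    using main_C[of G C0] assms by blast
  moreover have "hodge_11 I B" unfolding True hodge_11_def by (simp add: bil_zero)
  ultimately show ?thesis by blast
qed

end
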